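(* For every graph $G$ and every path $P$, $\pi^*(G\boxtimes P)\le 4\,\pi^*(G)$.
   Context: All graphs are finite and simple. A lazy walk in a graph $G$ is a sequence of vertices $v_1,\dots,v_m$ such that for each $i<m$, either $v_iv_{i+1}\in E(G)$ or $v_i=v_{i+1}$. For a colouring $\phi$ of $V(G)$, a lazy walk $v_1,\dots,v_{2t}$ is $\phi$-repetitive if $\phi(v_i)=\phi(v_{i+t})$ for each $i\in\{1,\dots,t\}$. A colouring $\phi$ is strongly nonrepetitive if for every $\phi$-repetitive lazy walk $v_1,\dots,v_{2t}$ there exists $i\in\{1,\dots,t\}$ with $v_i=v_{i+t}$. $\pi^*(G)$ denotes the minimum number of colours in a strongly nonrepetitive colouring of $G$. The strong product $A\boxtimes B$ has vertex set $V(A)\times V(B)$, with distinct $(v,x),(w,y)$ adjacent iff ($v=w$ and $xy\in E(B)$) or ($x=y$ and $vw\in E(A)$) or ($vw\in E(A)$ and $xy\in E(B)$). *)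

theory Defs
  imports Main
begin

definition graph :: "'a set \<Rightarrow> ('a \<Rightarrow> 'a \<Rightarrow> bool) \<Rightarrow> bool" where
  "graph V E \<longleftrightarrow> finite V \<and> (\<forall>x y. E x y \<longrightarrow> x \<in> V \<and> y \<in> V)
     \<and> (\<forall>x y. E x y \<longrightarrow> E y x) \<and> (\<forall>x. \<not> E x x)"

text \<open>Lazy walk v_1..v_m (as a list, 0-indexed).\<close>
definition lazy_walk :: "'a set \<Rightarrow> ('a \<Rightarrow> 'a \<Rightarrow> bool) \<Rightarrow> 'a list \<Rightarrow> bool" where
  "lazy_walk V E ws \<longleftrightarrow> set ws \<subseteq> V \<and>
     (\<forall>i. Suc i < length ws \<longrightarrow> E (ws ! i) (ws ! Suc i) \<or> ws ! i = ws ! Suc i)"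

definition strongly_nonrepetitive ::
  "'a set \<Rightarrow> ('a \<Rightarrow> 'a \<Rightarrow> bool) \<Rightarrow> ('a \<Rightarrow> 'c) \<Rightarrow> bool" where
  "strongly_nonrepetitive V E \<phi> \<longleftrightarrow>
     (\<forall>ws t. lazy_walk V E ws \<and> t \<ge> 1 \<and> length ws = 2 * t \<and>
        (\<forall>i<t. \<phi> (ws ! i) = \<phi> (ws ! (i + t)))
        \<longrightarrow> (\<exists>i<t. ws ! i = ws ! (i + t)))"

definition pi_star :: "'a set \<Rightarrow> ('a \<Rightarrow> 'a \<Rightarrow> bool) \<Rightarrow> nat" where
  "pi_star V E = (LEAST k. \<exists>\<phi> :: 'a \<Rightarrow> nat.
      \<phi> ` V \<subseteq> {..<k} \<and> strongly_nonrepetitive V E \<phi>)"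

definition strong_prod_V :: "'a set \<Rightarrow> 'b set \<Rightarrow> ('a \<times> 'b) set" where
  "strong_prod_V VA VB = VA \<times> VB"

definition strong_prod_E ::
  "('a \<Rightarrow> 'a \<Rightarrow> bool) \<Rightarrow> ('b \<Rightarrow> 'b \<Rightarrow> bool) \<Rightarrow> 'a \<times> 'b \<Rightarrow> 'a \<times> 'b \<Rightarrow> bool" where
  "strong_prod_E EA EB p q \<longleftrightarrow> p \<noteq> q \<and>
     (let (v, x) = p; (w, y) = q in
       (v = w \<and> EB x y) \<or> (x = y \<and> EA v w) \<or> (EA v w \<and> EB x y))"

definition is_path_graph :: "'a set \<Rightarrow> ('a \<Rightarrow> 'a \<Rightarrow> bool) \<Rightarrow> bool" where
  "is_path_graph V E \<longleftrightarrow> (\<exists>(n::nat) f. bij_betw f {..<n} V \<and>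
     (\<forall>i<n. \<forall>j<n. E (f i) (f j) \<longleftrightarrow> (i = j + 1 \<or> j = i + 1))
     \<and> (\<forall>x y. E x y \<longrightarrow> x \<in> V \<and> y \<in> V))"

end

theory Submission
  imports Defs
begin


fun tm :: "nat \<Rightarrow> bool" where
  "tm 0 = False"
| "tm (Suc n) = (tm (Suc n div 2) \<noteq> odd (Suc n))"

lemma tm_even: "tm (2*k) = tm k"
  by (cases k) auto

lemma tm_odd: "tm (Suc (2*k)) = (\<not> tm k)"
  by simp
lemma tm_odd': "tm (2*k+1) = (\<not> tm k)"
  by simp

declare tm.simps(2)[simp del]

lemma tm_blk: "even x \<Longrightarrow> tm x \<noteq> tm (Suc x)"
  by (metis evenE tm_even tm_odd)

lemma tm_half: assumes "x mod 2 = y mod 2" "tm x = tm y" shows "tm (x div 2) = tm (y div 2)"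
proof -
  have x: "x = 2*(x div 2) + x mod 2" and y: "y = 2*(y div 2) + y mod 2" by auto
  show ?thesis
  proof (cases "x mod 2 = 0")
    case True
    then have "y mod 2 = 0" using assms by simp
    then show ?thesis using True assms x y by (metis add.right_neutral tm_even)
  next
    case False
    then have a: "x mod 2 = 1" "y mod 2 = 1" using assms by auto
    then show ?thesis using assms x y by (metis tm_odd')
  qed
qed

lemma tm_overlap_free: "0 < l \<Longrightarrow> \<exists>j\<le>l. tm (a+j) \<noteq> tm (a+l+j)"
proof (induction l arbitrary: a rule: less_induct)
  case (less l)
  show ?case
  proof (cases "even l")
    case True
    then obtain m where m: "l = 2*m" by blast
    with less.prems have "0 < m" "m < l" by auto
    from less.IH[OF \<open>m < l\<close> \<open>0<m\<close>, of "a div 2"] obtain j where j: "j \<le> m"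
      "tm (a div 2 + j) \<noteq> tm (a div 2 + m + j)" by blast
    have "tm (a + 2*j) \<noteq> tm (a + l + 2*j)"
    proof
      assume "tm (a + 2*j) = tm (a + l + 2*j)"
      moreover have "(a + 2*j) mod 2 = (a + l + 2*j) mod 2" using m by simp
      ultimately have "tm ((a + 2*j) div 2) = tm ((a + l + 2*j) div 2)" by (rule tm_half[rotated])
      moreover have "(a + 2*j) div 2 = a div 2 + j" "(a + l + 2*j) div 2 = a div 2 + m + j" using m by auto
      ultimately show False using j by simp
    qed
    then show ?thesis using j m by (intro exI[of _ "2*j"]) auto
  next
    case False
    show ?thesis
    proof (rule ccontr)
      assume "\<not> ?thesis"
      then have ov: "\<And>j. j \<le> l \<Longrightarrow> tm (a+j) = tm (a+l+j)" by blast
      show False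
      proof (cases "l = 1")
        case True
        have "tm a = tm (a+1)" "tm (a+1) = tm (a+2)" using ov[of 0] ov[of 1] True by auto
        then show False using tm_blk[of a] tm_blk[of "a+1"] by (cases "even a") auto
      next
        case l1: False
        with False less.prems have l3: "l \<ge> 3" by presburger
        have alt: "tm x \<noteq> tm (Suc x)" if "a \<le> x" "x < a + 2*l" for x
        proof (cases "x < a + l")
          case True
          show ?thesis
          proof (cases "even x")
            case True then show ?thesis by (rule tm_blk)
          next
            case ox: False
            have "even (x + l)" using ox False by simp
            then have "tm (x+l) \<noteq> tm (Suc (x+l))" by (rule tm_blk)
            moreover have "tm x = tm (x + l)" using ov[of "x - a"] True that by (simp add: add.commute)
            moreover have "tm (Suc x) = tm (Suc x + l)" using ov[of "Suc x - a"] True that by (simp add: ac_simps)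
            ultimately show ?thesis by simp
          qed
        next
          case nt: False
          show ?thesis
          proof (cases "even x")
            case True then show ?thesis by (rule tm_blk)
          next
            case ox: False
            have "even (x - l)" using ox False nt by (simp add: even_diff_nat)
            then have "tm (x-l) \<noteq> tm (Suc (x-l))" by (rule tm_blk)
            moreover have "tm (x - l) = tm x" using ov[of "x - l - a"] nt that by simp
            moreover have "tm (Suc (x-l)) = tm (Suc x)" using ov[of "Suc x - l - a"] nt that by (simp add: Suc_diff_le)
            ultimately show ?thesis by simp
          qed
        qed
        have "\<And>j. j \<le> 2 \<Longrightarrow> tm (a+j) = tm (a+2+j)"
        proof -
          fix j :: nat assume "j \<le> 2"
          have "tm (a+j) \<noteq> tm (Suc (a+j))" using alt[of "a+j"] l3 \<open>j\<le>2\<close> by simp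
          moreover have "tm (Suc (a+j)) \<noteq> tm (Suc (Suc (a+j)))" using alt[of "Suc (a+j)"] l3 \<open>j\<le>2\<close> by simp
          ultimately show "tm (a+j) = tm (a+2+j)" by simp
        qed
        moreover from less.IH[of 2 a] l3 obtain j where "j \<le> 2" "tm (a+j) \<noteq> tm (a+2+j)" by auto
        ultimately show False by blast
      qed
    qed
  qed
qed

definition s :: "nat \<Rightarrow> nat" where
  "s n = (if tm n = tm (Suc n) then 1 else if tm n then 0 else 2)"

lemma s_lt: "s n < 3" by (simp add: s_def)

lemma s_step: "s x = s y \<Longrightarrow> (tm x = tm y) = (tm (Suc x) = tm (Suc y))"
  by (auto simp: s_def split: if_splits)

lemma s_step2: "s x = s y \<Longrightarrow> tm x \<noteq> tm y \<Longrightarrow> tm (Suc x) = tm x"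
  by (auto simp: s_def split: if_splits)

lemma s_square_free: assumes "0 < l" shows "\<exists>j<l. s (a+j) \<noteq> s (a+l+j)"
proof (rule ccontr)
  assume "\<not> ?thesis"
  then have sq: "\<And>j. j < l \<Longrightarrow> s (a+j) = s (a+l+j)" by blast
  show False
  proof (cases "tm a = tm (a+l)")
    case True
    have "\<forall>j\<le>l. tm (a+j) = tm (a+l+j)"
    proof (intro allI impI)
      fix j assume "j \<le> l" then show "tm (a+j) = tm (a+l+j)"
      proof (induction j)
        case 0 then show ?case using True by simp
      next
        case (Suc j)
        then have "tm (a+j) = tm (a+l+j)" by simp
        with s_step[OF sq[of j]] Suc.prems show ?case by simp
      qed
    qed
    with tm_overlap_free[OF assms, of a] show False by blast
  next
    case False
    have "\<forall>j\<le>l. tm (a+j) \<noteq> tm (a+l+j) \<and> tm (a+j) = tm a"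
    proof (intro allI impI)
      fix j assume "j \<le> l" then show "tm (a+j) \<noteq> tm (a+l+j) \<and> tm (a+j) = tm a"
      proof (induction j)
        case 0 then show ?case using False by simp
      next
        case (Suc j)
        then have h: "tm (a+j) \<noteq> tm (a+l+j)" "tm (a+j) = tm a" by auto
        have "s (a+j) = s (a+l+j)" using sq Suc.prems by simp
        with s_step[OF this] s_step2[OF this h(1)] h show ?case by simp
      qed
    qed
    then have "tm (a+l) = tm a" by blast
    then show False using False by simp
  qed
qed



definition pos :: "nat \<Rightarrow> nat" where "pos c = 3*(c div 2) + c mod 2"
lemma pos_mod: "pos c mod 3 = c mod 2" unfolding pos_def by simp
lemma pos_div: "pos c div 3 = c div 2" unfolding pos_def by simp
lemma pos_sig: "2*(pos c div 3) + pos c mod 3 = c" by (simp add: pos_div pos_mod)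
lemma pos_shift: "pos (c + 2*m) = pos c + 3*m" unfolding pos_def by simp
lemma pos_suc: "pos c < pos (Suc c)" unfolding pos_def by (cases "even c") (auto elim!: evenE oddE)
lemma pos_mono: "c \<le> c' \<Longrightarrow> pos c \<le> pos c'"
  by (induction c' rule: dec_induct) (auto intro: order_trans less_imp_le[OF pos_suc])
lemma pos_range: assumes "0 < m" "i < 2*m" shows "a \<le> pos (2*(a div 3) + a mod 3 + i)" "pos (2*(a div 3) + a mod 3 + i) < a + 3*m"
proof -
  obtain q r where a: "a = 3*q + r" "r < 3" and qr: "q = a div 3" "r = a mod 3" by auto
  have r: "r = 0 \<or> r = 1 \<or> r = 2" using a by arith
  have "pos (2*q + r) \<ge> a" using r a unfolding pos_def by auto
  then show "a \<le> pos (2*(a div 3) + a mod 3 + i)" using pos_mono[of "2*q+r" "2*q+r+i"] qr by simp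
  have "pos (2*q + r + (2*m - 1)) < a + 3*m"
  proof -
    obtain m' where m': "m = Suc m'" using assms by (cases m) auto
    have "2*q + r + (2*m - 1) = (r + 1) + 2*(q + m')" using m' by simp
    moreover have "pos ((r+1) + 2*(q+m')) = pos (r+1) + 3*(q+m')" by (rule pos_shift)
    moreover have "pos (r+1) < r + 3" using r unfolding pos_def by auto
    ultimately show ?thesis using a m' by (simp add: ac_simps)
  qed
  moreover have "pos (2*q+r+i) \<le> pos (2*q + r + (2*m - 1))" using assms by (intro pos_mono) simp
  ultimately show "pos (2*(a div 3) + a mod 3 + i) < a + 3*m" using qr by simp
qed

lemma mod3_aux: assumes "(r::nat) < 3" "k < 3" "k \<noteq> 0" "((r = 2) = ((r+k) mod 3 = 2))" "(((r+1) mod 3 = 2) = ((r+1+k) mod 3 = 2))" "(((r+2) mod 3 = 2) = ((r+2+k) mod 3 = 2))" shows False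
proof -
  have "r = 0 \<or> r = 1 \<or> r = 2" "k = 1 \<or> k = 2" using assms(1-3) by arith+
  then show False using assms(4-6) by auto
qed
lemma t2: "(a::nat) mod 3 = 0 \<Longrightarrow> (a+2) mod 3 = 2" by presburger
lemma t3: "(a::nat) mod 3 = 1 \<Longrightarrow> (a+1) mod 3 = 2" by presburger

lemma aux1: assumes "(r::nat) < 3" "r \<noteq> 0" "(r = 2) = ((r+1) mod 3 = 2)" shows False
proof -
  have "r = 1 \<or> r = 2" using assms(1,2) by arith
  then show False using assms(3) by auto
qed
lemma aux2: assumes "(r::nat) < 3" "(r = 2) = ((r+2) mod 3 = 2)" "((r+1) mod 3 = 2) = ((r+1+2) mod 3 = 2)" shows False
proof -
  have "r = 0 \<or> r = 1 \<or> r = 2" using assms(1) by arith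
  then show False using assms(2,3) by auto
qed
lemma modj: "(a + j) mod 3 = ((a::nat) mod 3 + j) mod 3" by (simp add: mod_add_left_eq)
lemma modlj: "(a + l + j) mod 3 = ((a::nat) mod 3 + j + l mod 3) mod 3"
proof -
  have "(a mod 3 + j + l mod 3) mod 3 = (a mod 3 + j + l) mod 3" by (simp add: mod_add_right_eq)
  also have "\<dots> = (a mod 3 + (j + l)) mod 3" by (simp add: add.assoc)
  also have "\<dots> = (a + (j+l)) mod 3" by (simp add: mod_add_left_eq)
  finally show ?thesis by (simp add: ac_simps)
qed

definition psi :: "nat \<Rightarrow> nat" where
  "psi n = (if n mod 3 = 2 then 3 else s (2*(n div 3) + n mod 3))"

lemma psi_lt: "psi n < 4" using s_lt[of "2*(n div 3) + n mod 3"] by (simp add: psi_def)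

lemma psi_3: "psi n = 3 \<longleftrightarrow> n mod 3 = 2"
  using s_lt[of "2*(n div 3) + n mod 3"] by (auto simp: psi_def)

lemma s_adj: "s n \<noteq> s (Suc n)"
  using s_square_free[of 1 n] by auto

lemma psi_pos: "psi (pos c) = s c"
proof -
  have "c mod 2 \<noteq> 2" by simp
  then show ?thesis using pos_mod[of c] pos_sig[of c] by (simp add: psi_def)
qed

lemma psi_square_free: assumes "0 < l" shows "\<exists>j<l. psi (a+j) \<noteq> psi (a+l+j)"
proof (rule ccontr)
  assume "\<not> ?thesis"
  then have sq: "\<And>j. j < l \<Longrightarrow> psi (a+j) = psi (a+l+j)" by blast
  have e: "((a mod 3 + j) mod 3 = 2) = ((a mod 3 + j + l mod 3) mod 3 = 2)" if "j < l" for j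
  proof -
    have "(psi (a+j) = 3) = (psi (a+l+j) = 3)" using sq[OF that] by simp
    then have "((a+j) mod 3 = 2) = ((a+l+j) mod 3 = 2)" by (simp only: psi_3)
    then show ?thesis unfolding modj[of a j] modlj[of a l j] .
  qed
  have ar: "a mod 3 < 3" "l mod 3 < 3" by auto
  show False
  proof (cases "l mod 3 = 0")
    case False
    show False
    proof (cases "l = 1 \<and> a mod 3 = 0")
      case True
      have "pos (2*(a div 3)) = a" "pos (Suc (2*(a div 3))) = a + 1" using True unfolding pos_def by auto
      then have "psi a = s (2*(a div 3))" "psi (a+1) = s (Suc (2*(a div 3)))" using psi_pos by metis+
      then show False using sq[of 0] True s_adj by simp
    next
      case nt: False
      have "l = 1 \<or> l = 2 \<or> l \<ge> 3" using assms by linarith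
      then show False
      proof (elim disjE)
        assume "l = 1" then show False using e[of 0] nt aux1[of "a mod 3"] ar by simp
      next
        assume "l = 2" then show False using e[of 0] e[of 1] aux2[of "a mod 3"] ar by simp
      next
        assume "l \<ge> 3" then show False using e[of 0] e[of 1] e[of 2] mod3_aux[of "a mod 3" "l mod 3"] ar False by simp
      qed
    qed
  next
    case True
    then obtain m where m: "l = 3*m" by blast
    with assms have "0 < m" by simp
    define b where "b = 2*(a div 3) + a mod 3"
    have "\<exists>i<2*m. s (b+i) \<noteq> s (b+2*m+i)" using s_square_free \<open>0<m\<close> by simp
    then obtain i where i: "i < 2*m" "s (b+i) \<noteq> s (b+2*m+i)" by blast
    define x where "x = pos (b+i)"
    have xr: "a \<le> x" "x < a + l" unfolding x_def b_def using pos_range[OF \<open>0<m\<close> i(1), of a] m by auto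
    have "psi x = s (b+i)" unfolding x_def by (rule psi_pos)
    moreover have "psi (x+l) = s (b+2*m+i)" unfolding x_def m using pos_shift[of "b+i" m] psi_pos[of "b+i+2*m"]
      by (simp add: ac_simps)
    moreover have "psi x = psi (x + l)" using sq[of "x-a"] xr by (simp add: add.commute add.left_commute)
    ultimately show False using i by simp
  qed
qed

lemma psi_adj: "psi n \<noteq> psi (Suc n)"
  using psi_square_free[of 1 n] by auto

lemma psi_adj2: "psi n \<noteq> psi (Suc (Suc n))"
proof (rule notI)
  assume h: "psi n = psi (Suc (Suc n))"
  have n3: "n mod 3 < 3" by simp
  have "n mod 3 = 1"
  proof -
    have "n mod 3 = 0 \<or> n mod 3 = 1 \<or> n mod 3 = 2" using n3 by arith
    moreover have "(n mod 3 = 2) = ((n mod 3 + 2) mod 3 = 2)" using h psi_3[of n] psi_3[of "n+2"] modj[of n 2] by simp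
    ultimately show ?thesis by auto
  qed
  then have "n = 3*(n div 3) + 1" using div_mult_mod_eq[of n 3] by simp
  then obtain q where q: "n = 3*q + 1" by blast
  have p1: "pos (2*q+1) = n" using q by (simp add: pos_def)
  have p2: "pos (2*(q+1)) = Suc (Suc n)" using q by (simp add: pos_def)
  have "psi n = s (2*q+1)" using psi_pos[of "2*q+1"] p1 by simp
  moreover have "psi (Suc (Suc n)) = s (2*(q+1))" using psi_pos[of "2*(q+1)"] p2 by simp
  ultimately show False using h s_adj[of "2*q+1"] by simp
qed

lemma psi_close: "psi x = psi y \<Longrightarrow> x \<le> y + 2 \<Longrightarrow> y \<le> x + 2 \<Longrightarrow> x = y"
proof (induction x y rule: linorder_wlog)
  case (le a b)
  then have "b = a \<or> b = Suc a \<or> b = Suc (Suc a)" by arith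
  then show ?case using le psi_adj psi_adj2 by auto
next
  case (sym a b) then show ?case by simp
qed



lemma ivt_up:
  fixes f :: "nat \<Rightarrow> int"
  assumes "\<And>i. a \<le> i \<Longrightarrow> i < b \<Longrightarrow> \<bar>f (Suc i) - f i\<bar> \<le> 1" "a \<le> b" "f a \<le> y" "y \<le> f b"
  shows "\<exists>i. a \<le> i \<and> i \<le> b \<and> f i = y"
  using assms
proof (induction b)
  case 0 then show ?case by auto
next
  case (Suc b)
  show ?case
  proof (cases "a \<le> b \<and> y \<le> f b")
    case True
    then obtain i where "a \<le> i \<and> i \<le> b \<and> f i = y" using Suc by auto
    then show ?thesis by (intro exI[of _ i]) auto
  next
    case False
    show ?thesis
    proof (cases "a = Suc b")
      case True then show ?thesis using Suc.prems by auto
    next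
      case nb: False
      then have "a \<le> b" using Suc.prems by simp
      with False have "f b < y" by simp
      moreover have "\<bar>f (Suc b) - f b\<bar> \<le> 1" using Suc.prems(1)[of b] \<open>a \<le> b\<close> by simp
      ultimately have "f (Suc b) = y" using Suc.prems by simp
      then show ?thesis using Suc.prems by (intro exI[of _ "Suc b"]) auto
    qed
  qed
qed

lemma ivt_down:
  fixes f :: "nat \<Rightarrow> int"
  assumes "\<And>i. a \<le> i \<Longrightarrow> i < b \<Longrightarrow> \<bar>f (Suc i) - f i\<bar> \<le> 1" "a \<le> b" "f b \<le> y" "y \<le> f a"
  shows "\<exists>i. a \<le> i \<and> i \<le> b \<and> f i = y"
proof -
  have "\<exists>i. a \<le> i \<and> i \<le> b \<and> - f i = - y"
    by (rule ivt_up[of a b "\<lambda>i. - f i"]) (use assms in \<open>auto simp: abs_minus_commute\<close>)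
  then show ?thesis by auto
qed

lemma psi_close_int: "psi x = psi y \<Longrightarrow> \<bar>int x - int y\<bar> \<le> 2 \<Longrightarrow> x = y"
  by (rule psi_close) auto

lemma path_main:
  fixes P :: "nat \<Rightarrow> nat"
  assumes walk: "\<And>i. Suc i < 2*t \<Longrightarrow> \<bar>int (P (Suc i)) - int (P i)\<bar> \<le> 1"
    and rep: "\<And>i. i < t \<Longrightarrow> psi (P i) = psi (P (i+t))"
    and t: "t \<ge> 1"
  shows "\<forall>i<t. P i = P (i+t)"
proof -
  define p where "p i = int (P i)" for i
  define q where "q i = int (P (i+t))" for i
  have wp: "\<bar>p (Suc i) - p i\<bar> \<le> 1" if "Suc i < t" for i using walk[of i] that unfolding p_def by simp
  have wq: "\<bar>q (Suc i) - q i\<bar> \<le> 1" if "Suc i < t" for i using walk[of "i+t"] that unfolding q_def by simp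
  have wt: "\<bar>q 0 - p (t - 1)\<bar> \<le> 1" using walk[of "t-1"] t unfolding p_def q_def by simp
  have close: "P i = P (j+t)" if "psi (P i) = psi (P (j+t))" "\<bar>p i - q j\<bar> \<le> 2" for i j
    using psi_close_int that unfolding p_def q_def by blast
  have closep: "P i = P j" if "psi (P i) = psi (P j)" "\<bar>p i - p j\<bar> \<le> 2" for i j
    using psi_close_int that unfolding p_def by blast
  have closeq: "P (i+t) = P (j+t)" if "psi (P (i+t)) = psi (P (j+t))" "\<bar>q i - q j\<bar> \<le> 2" for i j
    using psi_close_int that unfolding q_def by blast
  have propg: "p i = q i \<longleftrightarrow> p (Suc i) = q (Suc i)" if "Suc i < t" for i
  proof
    assume "p i = q i"
    then show "p (Suc i) = q (Suc i)" using close[of "Suc i" "Suc i"] rep[of "Suc i"] wp[OF that] wq[OF that] that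
      unfolding p_def q_def by simp
  next
    assume "p (Suc i) = q (Suc i)"
    then show "p i = q i" using close[of i i] rep[of i] wp[OF that] wq[OF that] that
      unfolding p_def q_def by simp
  qed
  show ?thesis
  proof (cases "p 0 = q 0")
    case True
    have "p i = q i" if "i < t" for i using that
    proof (induction i)
      case 0 then show ?case using True by simp
    next
      case (Suc i) then show ?case using propg[of i] by simp
    qed
    then show ?thesis unfolding p_def q_def by simp
  next
    case False
    have neq: "p i \<noteq> q i" if "i < t" for i using that
    proof (induction i)
      case 0 then show ?case using False by simp
    next
      case (Suc i) then show ?case using propg[of i] by simp
    qed
    have inv: "\<exists>c e. (e = 1 \<or> e = -1) \<and> (\<forall>i\<le>k. q i = c + e * p i)" if "k < t" for k
      using that
    proof (induction k)
      case 0 then show ?case by (intro exI[of _ "q 0 - p 0"] exI[of _ 1]) auto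
    next
      case (Suc k)
      then obtain c e where ce: "e = 1 \<or> e = -1" "\<forall>i\<le>k. q i = c + e * p i" by auto
      have st: "Suc k < t" using Suc by simp
      define x where "x = p k"
      define x' where "x' = p (Suc k)"
      define y where "y = q k"
      define y' where "y' = q (Suc k)"
      have yx: "y = c + e * x" using ce unfolding x_def y_def by simp
      have dx: "\<bar>x' - x\<bar> \<le> 1" using wp[OF st] unfolding x_def x'_def .
      have dy: "\<bar>y' - y\<bar> \<le> 1" using wq[OF st] unfolding y_def y'_def .
      have r1: "psi (P (Suc k)) = psi (P (Suc k + t))" using rep st by blast
      have r0: "psi (P k) = psi (P (k + t))" using rep st by simp
      show ?case
      proof (cases "x' = x")
        case True
        have "P (Suc k + t) = P (k + t)"
          using closeq[of "Suc k" k] r1 r0 True dy unfolding x_def x'_def y_def y'_def p_def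
          by simp
        then have "y' = y" unfolding y_def y'_def q_def by simp
        then show ?thesis using ce True yx unfolding x'_def y'_def
          by (intro exI[of _ c] exI[of _ e]) (auto simp: le_Suc_eq)
      next
        case xne: False
        have yne: "y' \<noteq> y"
        proof
          assume "y' = y"
          then have "psi (P (Suc k)) = psi (P k)" using r1 r0 unfolding y_def y'_def q_def by simp
          then have "P (Suc k) = P k" using closep[of "Suc k" k] dx unfolding x_def x'_def by simp
          then show False using xne unfolding x_def x'_def p_def by simp
        qed
        have good: "\<exists>c e. (e = 1 \<or> e = -1) \<and> (\<forall>i\<le>Suc k. q i = c + e * p i)"
          if h: "y' = c + e * x'"
          using ce h unfolding x'_def y'_def by (intro exI[of _ c] exI[of _ e]) (auto simp: le_Suc_eq)
        show ?thesis
        proof (cases "\<exists>i\<le>k. p i = x'")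
          case True
          then obtain i where i: "i \<le> k" "p i = x'" by blast
          have qi: "q i = c + e * x'" using ce i by simp
          have "\<bar>q i - y'\<bar> \<le> 2" using qi yx dx dy ce(1) by (auto simp: abs_if split: if_splits)
          moreover have "psi (P (i+t)) = psi (P (Suc k + t))"
            using rep[of i] i st r1 \<open>p i = x'\<close> unfolding x'_def p_def by simp
          ultimately have "P (i+t) = P (Suc k + t)" using closeq[of i "Suc k"] unfolding y'_def by simp
          then have "y' = c + e * x'" using qi unfolding y'_def q_def by simp
          then show ?thesis by (rule good)
        next
          case nx': False
          show ?thesis
          proof (cases "\<exists>i\<le>k. p i = 2*x - x'")
            case True
            then obtain i where i: "i \<le> k" "p i = 2*x - x'" by blast
            have qi: "q i = c + e * (2*x - x')" using ce i by simp
            have "psi (P i) \<noteq> psi (P (Suc k))"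
            proof
              assume "psi (P i) = psi (P (Suc k))"
              moreover have "\<bar>p i - p (Suc k)\<bar> \<le> 2" using i dx unfolding x'_def by simp
              ultimately have "P i = P (Suc k)" by (rule closep)
              then show False using i xne unfolding p_def x'_def by simp
            qed
            then have "psi (P (i+t)) \<noteq> psi (P (Suc k + t))" using rep[of i] r1 i st by simp
            then have "q i \<noteq> y'" unfolding q_def y'_def by auto
            then have "y' = c + e * x'" using qi yx dx dy ce(1) xne yne
              by (auto simp: abs_if split: if_splits)
            then show ?thesis by (rule good)
          next
            case nx2: False
            have allx: "\<forall>i\<le>k. p i = x"
            proof (rule ccontr)
              assume "\<not> (\<forall>i\<le>k. p i = x)"
              then obtain i where i: "i \<le> k" "p i \<noteq> x" by blast
              have wpi: "\<And>j. i \<le> j \<Longrightarrow> j < k \<Longrightarrow> \<bar>p (Suc j) - p j\<bar> \<le> 1" using wp st by simp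
              have "\<exists>j. i \<le> j \<and> j \<le> k \<and> (p j = x - 1 \<or> p j = x + 1)"
              proof (cases "p i < x")
                case True
                from ivt_up[of i k p "x - 1", OF wpi i(1)] True show ?thesis unfolding x_def by force
              next
                case False
                with i have "p i > x" by simp
                from ivt_down[of i k p "x + 1", OF wpi i(1)] this show ?thesis unfolding x_def by force
              qed
              then obtain j where j: "j \<le> k" "p j = x - 1 \<or> p j = x + 1" by auto
              have "x' = x - 1 \<or> x' = x + 1" using dx xne by auto
              then show False using j nx' nx2 by auto
            qed
            define e' where "e' = (y' - y) * (x' - x)"
            have dx1: "x' - x = 1 \<or> x' - x = -1" using dx xne by arith
            have dy1: "y' - y = 1 \<or> y' - y = -1" using dy yne by arith
            have e': "e' = 1 \<or> e' = -1" "y' = y + e' * (x' - x)"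
              using dx1 dy1 unfolding e'_def by (auto simp: algebra_simps)
            show ?thesis
            proof (rule exI[of _ "y - e' * x"], rule exI[of _ e'], intro conjI allI impI)
              show "e' = 1 \<or> e' = -1" by (rule e'(1))
            next
              fix i assume "i \<le> Suc k"
              then consider "i \<le> k" | "i = Suc k" by arith
              then show "q i = y - e' * x + e' * p i"
              proof cases
                case 1
                then have "p i = x" using allx by simp
                moreover have "q i = c + e * p i" using ce 1 by simp
                ultimately show ?thesis using yx by simp
              next
                case 2
                then show ?thesis using e'(2) unfolding x'_def y'_def by (simp add: algebra_simps)
              qed
            qed
          qed
        qed
      qed
    qed
    from inv[of "t-1"] t obtain c e where ce: "e = 1 \<or> e = -1" "\<forall>i<t. q i = c + e * p i"
      by (auto simp: less_Suc_eq_le[symmetric])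
    have wpt: "\<And>j. 0 \<le> j \<Longrightarrow> j < t - 1 \<Longrightarrow> \<bar>p (Suc j) - p j\<bar> \<le> 1" using wp by simp
    have vis: "\<exists>i<t. p i = y" if "(p 0 \<le> y \<and> y \<le> p (t-1)) \<or> (p (t-1) \<le> y \<and> y \<le> p 0)" for y
    proof -
      have "\<exists>i. 0 \<le> i \<and> i \<le> t - 1 \<and> p i = y"
        using that ivt_up[of 0 "t-1" p y, OF wpt] ivt_down[of 0 "t-1" p y, OF wpt] by auto
      then obtain i where "i \<le> t - 1" "p i = y" by blast
      moreover have "i < t" using \<open>i \<le> t - 1\<close> t by linarith
      ultimately show ?thesis by blast
    qed
    have pn: "p i \<ge> 0" "q i \<ge> 0" for i unfolding p_def q_def by auto
    have cl: "P i = P (i+t)" if "i < t" "\<bar>p i - q i\<bar> \<le> 2" for i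
      using close[of i i] rep[OF \<open>i<t\<close>] that(2) by simp
    have qq: "q i = c + e * p i" if "i < t" for i using ce that by simp
    have t0: "0 < t" using t by simp
    have wt1: "q 0 - 1 \<le> p (t-1)" "p (t-1) \<le> q 0 + 1" using wt by arith+
    show ?thesis
    proof (cases "e = -1")
      case True
      have c: "c = p 0 + q 0" using qq[OF t0] True by simp
      show ?thesis
      proof (cases "q 0 > p 0")
        case True
        define y where "y = (c - 1) div 2"
        have y2: "c - 1 = 2*y + (c-1) mod 2" "(c-1) mod 2 \<ge> 0" "(c-1) mod 2 < 2"
          unfolding y_def using div_mult_mod_eq[of "c-1" 2] by (linarith, simp, simp)
        have "p 0 \<le> y \<and> y \<le> p (t-1)" using y2 c True wt1 by linarith
        then obtain i where i: "i < t" "p i = y" using vis by blast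
        have "q i = c - y" using qq[OF i(1)] i(2) \<open>e = -1\<close> by simp
        then have "\<bar>p i - q i\<bar> \<le> 2" "p i \<noteq> q i" using y2 i(2) by auto
        then show ?thesis using cl[OF i(1)] neq[OF i(1)] unfolding p_def q_def by auto
      next
        case False
        with neq[OF t0] have lt: "q 0 < p 0" by simp
        define y where "y = (c + 2) div 2"
        have y2: "c + 2 = 2*y + (c+2) mod 2" "(c+2) mod 2 \<ge> 0" "(c+2) mod 2 < 2"
          unfolding y_def using div_mult_mod_eq[of "c+2" 2] by (linarith, simp, simp)
        have "p (t-1) \<le> y \<and> y \<le> p 0" using y2 c lt wt1 by linarith
        then obtain i where i: "i < t" "p i = y" using vis by blast
        have "q i = c - y" using qq[OF i(1)] i(2) \<open>e = -1\<close> by simp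
        then have "\<bar>p i - q i\<bar> \<le> 2" "p i \<noteq> q i" using y2 i(2) by auto
        then show ?thesis using cl[OF i(1)] neq[OF i(1)] unfolding p_def q_def by auto
      qed
    next
      case False
      then have e1: "e = 1" using ce(1) by simp
      have c: "c = q 0 - p 0" using qq[OF t0] e1 by simp
      have qi: "q i = c + p i" if "i < t" for i using qq[OF that] e1 by simp
      show ?thesis
      proof (cases "c > 0")
        case True
        have "0 < nat c" using True by simp
        from psi_square_free[OF this, of "P 0"] obtain j where j: "j < nat c"
          "psi (P 0 + j) \<noteq> psi (P 0 + nat c + j)" by blast
        have "p 0 \<le> p 0 + int j \<and> p 0 + int j \<le> p (t-1)" using j(1) c wt1 True by linarith
        then obtain i where i: "i < t" "p i = p 0 + int j" using vis by blast
        have "P i = P 0 + j" using i(2) unfolding p_def by simp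
        moreover have "P (i+t) = P 0 + nat c + j" using qi[OF i(1)] i(2) True unfolding p_def q_def by simp
        ultimately show ?thesis using rep[OF i(1)] j(2) by simp
      next
        case False
        with neq[OF t0] c have cn: "c < 0" by simp
        have "p (t-1) \<le> p 0 + c + 1 \<and> p 0 + c + 1 \<le> p 0" using cn c wt1 by linarith
        then obtain i0 where i0: "i0 < t" "p i0 = p 0 + c + 1" using vis by blast
        have a0: "p 0 + 2*c + 1 \<ge> 0" using qi[OF i0(1)] i0(2) pn(2)[of i0] by simp
        define a where "a = nat (p 0 + 2*c + 1)"
        have "0 < nat (-c)" using cn by simp
        from psi_square_free[OF this, of a] obtain j where j: "j < nat (-c)"
          "psi (a + j) \<noteq> psi (a + nat (-c) + j)" by blast
        define y where "y = p 0 + c + 1 + int j"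
        have "p (t-1) \<le> y \<and> y \<le> p 0" using j(1) cn c wt1 unfolding y_def by linarith
        then obtain i where i: "i < t" "p i = y" using vis by blast
        have "int (P i) = int (a + nat (-c) + j)" using i(2) a0 cn unfolding p_def y_def a_def by simp
        moreover have "int (P (i+t)) = int (a + j)" using qi[OF i(1)] i(2) a0 unfolding p_def q_def y_def a_def by simp
        ultimately show ?thesis using rep[OF i(1)] j(2) by (metis of_nat_eq_iff)
      qed
    qed
  qed
qed



lemma spE: "strong_prod_E EG EP p q \<Longrightarrow> (fst p = fst q \<or> EG (fst p) (fst q)) \<and> (snd p = snd q \<or> EP (snd p) (snd q))"
  by (cases p; cases q) (auto simp: strong_prod_E_def)

lemma inj_snr:
  assumes "inj_on \<phi> V" shows "strongly_nonrepetitive V E \<phi>"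
  unfolding strongly_nonrepetitive_def
proof (intro allI impI)
  fix ws :: "'a list" and t :: nat
  assume h: "lazy_walk V E ws \<and> 1 \<le> t \<and> length ws = 2 * t \<and> (\<forall>i<t. \<phi> (ws ! i) = \<phi> (ws ! (i + t)))"
  then have "ws ! 0 \<in> V" "ws ! t \<in> V" using nth_mem[of 0 ws] nth_mem[of t ws] unfolding lazy_walk_def by auto
  moreover have "\<phi> (ws ! 0) = \<phi> (ws ! t)" using h by fastforce
  ultimately have "ws ! 0 = ws ! (0 + t)" using assms inj_onD by fastforce
  then show "\<exists>i<t. ws ! i = ws ! (i + t)" using h by (intro exI[of _ 0]) auto
qed

lemma pi_star_ex:
  assumes "finite V"
  shows "\<exists>\<phi> :: 'a \<Rightarrow> nat. \<phi> ` V \<subseteq> {..<pi_star V E} \<and> strongly_nonrepetitive V E \<phi>"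
proof -
  obtain g :: "'a \<Rightarrow> nat" and n where g: "g ` V = {i. i < n}" "inj_on g V"
    using finite_imp_inj_to_nat_seg[OF assms] by blast
  have "\<exists>k. \<exists>\<phi> :: 'a \<Rightarrow> nat. \<phi> ` V \<subseteq> {..<k} \<and> strongly_nonrepetitive V E \<phi>"
    using g inj_snr[OF g(2)] by (intro exI[of _ n] exI[of _ g]) auto
  then show ?thesis unfolding pi_star_def by (rule LeastI_ex)
qed

theorem mainTheorem7:
  fixes VG :: "'a set" and EG :: "'a \<Rightarrow> 'a \<Rightarrow> bool"
    and VP :: "'b set" and EP :: "'b \<Rightarrow> 'b \<Rightarrow> bool"
  assumes "graph VG EG" and "graph VP EP" and "is_path_graph VP EP"
  shows "pi_star (strong_prod_V VG VP) (strong_prod_E EG EP) \<le> 4 * pi_star VG EG"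
proof -
  define k where "k = pi_star VG EG"
  have fin: "finite VG" using assms(1) unfolding graph_def by simp
  obtain \<phi> :: "'a \<Rightarrow> nat" where phi: "\<phi> ` VG \<subseteq> {..<k}" "strongly_nonrepetitive VG EG \<phi>"
    using pi_star_ex[OF fin, of EG] unfolding k_def by blast
  obtain n :: nat and f :: "nat \<Rightarrow> 'b" where nf: "bij_betw f {..<n} VP" "\<forall>i<n. \<forall>j<n. EP (f i) (f j) \<longleftrightarrow> (i = j + 1 \<or> j = i + 1)"
    using assms(3) unfolding is_path_graph_def by blast
  define idx where "idx = inv_into {..<n} f"
  have idx: "idx b < n" "f (idx b) = b" if "b \<in> VP" for b
    using that nf(1) unfolding idx_def
    by (auto simp: bij_betw_def intro: inv_into_into[of b f "{..<n}", simplified] f_inv_into_f)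
  define \<chi> where "\<chi> p = 4 * \<phi> (fst p) + psi (idx (snd p))" for p
  have chi_div: "\<chi> p div 4 = \<phi> (fst p)" "\<chi> p mod 4 = psi (idx (snd p))" for p
    using psi_lt[of "idx (snd p)"] unfolding \<chi>_def by auto
  have range: "\<chi> ` strong_prod_V VG VP \<subseteq> {..<4*k}"
  proof
    fix z assume "z \<in> \<chi> ` strong_prod_V VG VP"
    then obtain v b where vb: "v \<in> VG" "z = \<chi> (v, b)" unfolding strong_prod_V_def by auto
    have "\<phi> v < k" using phi(1) vb(1) by auto
    then show "z \<in> {..<4*k}" using vb psi_lt[of "idx b"] unfolding \<chi>_def by auto
  qed
  have snr: "strongly_nonrepetitive (strong_prod_V VG VP) (strong_prod_E EG EP) \<chi>"
    unfolding strongly_nonrepetitive_def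
  proof (intro allI impI)
    fix ws :: "('a \<times> 'b) list" and t :: nat
    assume h: "lazy_walk (strong_prod_V VG VP) (strong_prod_E EG EP) ws \<and> 1 \<le> t \<and> length ws = 2 * t
      \<and> (\<forall>i<t. \<chi> (ws ! i) = \<chi> (ws ! (i + t)))"
    have lw: "set ws \<subseteq> VG \<times> VP" using h unfolding lazy_walk_def strong_prod_V_def by simp
    have st: "(fst (ws!i) = fst (ws!Suc i) \<or> EG (fst (ws!i)) (fst (ws!Suc i))) \<and>
              (snd (ws!i) = snd (ws!Suc i) \<or> EP (snd (ws!i)) (snd (ws!Suc i)))" if "Suc i < length ws" for i
    proof -
      have "strong_prod_E EG EP (ws ! i) (ws ! Suc i) \<or> ws ! i = ws ! Suc i"
        using h that unfolding lazy_walk_def by blast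
      then show ?thesis using spE by fastforce
    qed
    have mem: "fst (ws!i) \<in> VG" "snd (ws!i) \<in> VP" if "i < length ws" for i
      using lw nth_mem[OF that] by auto
    define gs where "gs = map fst ws"
    have "lazy_walk VG EG gs"
      unfolding lazy_walk_def gs_def using lw st by (auto simp: eq_commute)
    moreover have "\<forall>i<t. \<phi> (gs ! i) = \<phi> (gs ! (i + t))"
      using h chi_div(1) unfolding gs_def by (metis length_map mult_2 nth_map trans_less_add1 add_less_cancel_right)
    ultimately obtain i where i: "i < t" "gs ! i = gs ! (i + t)"
      using phi(2) h unfolding strongly_nonrepetitive_def gs_def by (metis length_map)
    have fsteq: "fst (ws ! i) = fst (ws ! (i + t))" using i h unfolding gs_def by simp
    define P where "P j = idx (snd (ws ! j))" for j
    have walkP: "\<bar>int (P (Suc j)) - int (P j)\<bar> \<le> 1" if "Suc j < 2*t" for j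
    proof -
      have l: "Suc j < length ws" "j < length ws" using that h by auto
      have b: "snd (ws!j) \<in> VP" "snd (ws!Suc j) \<in> VP" using mem l by auto
      from st[OF l(1)] consider "snd (ws!j) = snd (ws!Suc j)" | "EP (snd (ws!j)) (snd (ws!Suc j))" by blast
      then show ?thesis
      proof cases
        case 1 then show ?thesis unfolding P_def by simp
      next
        case 2
        then have "EP (f (P j)) (f (P (Suc j)))" unfolding P_def using idx(2) b by simp
        then have "P j = P (Suc j) + 1 \<or> P (Suc j) = P j + 1" using nf(2) idx(1) b unfolding P_def by blast
        then show ?thesis by auto
      qed
    qed
    have repP: "psi (P j) = psi (P (j+t))" if "j < t" for j
      using h that chi_div(2) unfolding P_def by metis
    have "\<forall>j<t. P j = P (j+t)" by (rule path_main[OF walkP repP]) (use h in auto)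
    then have "P i = P (i+t)" using i by simp
    then have "snd (ws ! i) = snd (ws ! (i+t))" unfolding P_def using idx(2) mem i h
      by (metis add_less_cancel_right mult_2 trans_less_add1)
    then have "ws ! i = ws ! (i + t)" using fsteq by (simp add: prod_eq_iff)
    then show "\<exists>i<t. ws ! i = ws ! (i + t)" using i by blast
  qed
  have "\<exists>\<phi>' :: ('a \<times> 'b) \<Rightarrow> nat. \<phi>' ` strong_prod_V VG VP \<subseteq> {..<4*k} \<and>
          strongly_nonrepetitive (strong_prod_V VG VP) (strong_prod_E EG EP) \<phi>'"
    using range snr by blast
  then show ?thesis unfolding k_def pi_star_def by (rule Least_le)
qed


end
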